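(* Let $d\in\mathbb N$ and equip $\mathcal M_d$ with the entrywise norm $\|A\|_{\ell_p}=(\sum_{i,j}|A_{ij}|^p)^{1/p}$. Let $\mathcal S\subseteq\mathcal M_d$ be bounded, $A\in\operatorname{conv}(\mathcal S)$. Then there is a sequence $(X_i)_{i\ge1}\subseteq\mathcal S$ such that $A_k=\frac1k\sum_{i=1}^kX_i$ satisfies, for all $k\ge1$, $\|A-A_k\|_{\ell_p}\le \frac{2e^2}{p^{1/p}}k^{1/p-1}\operatorname{diam}(\mathcal S)$ if $1<p\le2$, and $\|A-A_k\|_{\ell_p}\le e^2\sqrt{2(p-1)/k}\,\operatorname{diam}(\mathcal S)$ if $p\ge 2$ (diameters taken in $\|\cdot\|_{\ell_p}$). Equivalently, for every $\epsilon>0$ there is $B$ with $\|A-B\|_{\ell_p}\le\epsilon$ which is an average of at most $\lceil C_p(\operatorname{diam}(\mathcal S)/\epsilon)^{p/(p-1)}\rceil$ points of $\mathcal S$ if $1<p\le 2$, resp. at most $\lceil D_p(\operatorname{diam}(\mathcal S)/\epsilon)^{2}\rceil$ points if $p\ge2$, where $C_p=(2e^2/p^{1/p})^{p/(p-1)}$ and $D_p=2(p-1)e^4$.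
   Context: $\mathcal M_d$ denotes complex $d\times d$ matrices; $\operatorname{conv}$ denotes convex hull. *)

theory Defs
  imports "HOL-Analysis.Analysis"
begin

definition lp_norm :: "real \<Rightarrow> complex ^ 'n ^ 'n \<Rightarrow> real" where
  "lp_norm p A = (\<Sum>i\<in>UNIV. \<Sum>j\<in>UNIV. cmod (A $ i $ j) powr p) powr (1 / p)"

definition lp_diam :: "real \<Rightarrow> (complex ^ 'n ^ 'n) set \<Rightarrow> real" where
  "lp_diam p S = (SUP x\<in>S. SUP y\<in>S. lp_norm p (x - y))"

end

theory Submission
  imports Defs
begin

lemma tangent_concave:
  fixes q s s0 :: real
  assumes q: "0 < q" "q \<le> 1" and s: "0 \<le> s" and s0: "0 < s0"
  shows "s powr q \<le> s0 powr q + q * s0 powr (q - 1) * (s - s0)"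
proof -
  have e1: "s0 powr (q - 1) * s0 = s0 powr q"
    using powr_add[of s0 "q - 1" 1] s0 by simp
  have e2: "s0 powr (1 - q) * s0 powr (q - 1) = 1"
    using s0 by (simp add: powr_add[symmetric])
  show ?thesis
  proof (cases "s = 0")
    case True
    have "0 \<le> (1 - q) * s0 powr q" using q by simp
    then show ?thesis using True e1 by (simp add: algebra_simps)
  next
    case False
    with s have sp: "0 < s" by simp
    have Y: "s powr q * s0 powr (1 - q) \<le> q * s + (1 - q) * s0"
      using Youngs_inequality_0[of q "1 - q" s s0] q sp s0 by simp
    have "s powr q = s powr q * s0 powr (1 - q) * s0 powr (q - 1)"
      using e2 by (simp add: mult.assoc)
    also have "\<dots> \<le> (q * s + (1 - q) * s0) * s0 powr (q - 1)"
      using Y by (rule mult_right_mono) simp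
    also have "\<dots> = s0 powr q + q * s0 powr (q - 1) * (s - s0)"
      using e1 by (simp add: algebra_simps)
    finally show ?thesis .
  qed
qed

lemma cmod_add_sq: "(cmod (a + b))^2 = (cmod a)^2 + 2 * Re (cnj a * b) + (cmod b)^2"
  unfolding cmod_power2 by (simp add: power2_eq_square algebra_simps)

lemma Re_cnj_le: "\<bar>Re (cnj a * b)\<bar> \<le> cmod a * cmod b"
  using abs_Re_le_cmod[of "cnj a * b"] by (simp add: norm_mult)

lemma sq_powr: "0 \<le> (x::real) \<Longrightarrow> (x^2) powr (p/2) = x powr p"
  by (simp add: powr_powr flip: powr_numeral)

definition lin1 :: "real \<Rightarrow> complex \<Rightarrow> complex \<Rightarrow> real" where
  "lin1 p a b = (if a = 0 then 0 else p * cmod a powr (p - 2) * Re (cnj a * b))"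

lemma scalar_le2:
  fixes p :: real and a b :: complex
  assumes p: "1 < p" "p \<le> 2"
  shows "cmod (a + b) powr p \<le> cmod a powr p + lin1 p a b + 6 * cmod b powr p"
proof (cases "a = 0")
  case True
  then show ?thesis by (simp add: lin1_def)
next
  case False
  define A where "A = cmod a"
  define B where "B = cmod b"
  have Ap: "0 < A" using False by (simp add: A_def)
  have B0: "0 \<le> B" by (simp add: B_def)
  have lin: "lin1 p a b = p * A powr (p - 2) * Re (cnj a * b)"
    using False by (simp add: lin1_def A_def)
  have RB: "\<bar>Re (cnj a * b)\<bar> \<le> A * B" using Re_cnj_le by (simp add: A_def B_def)
  show ?thesis
  proof (cases "B \<le> A")
    case True
    define s where "s = (cmod (a + b))^2"
    have s_eq: "s = A^2 + 2 * Re (cnj a * b) + B^2"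
      by (simp add: s_def A_def B_def cmod_add_sq)
    have "cmod (a + b) powr p = s powr (p/2)" by (simp add: s_def sq_powr)
    also have "\<dots> \<le> (A^2) powr (p/2) + (p/2) * (A^2) powr (p/2 - 1) * (s - A^2)"
      by (rule tangent_concave) (use p Ap in \<open>auto simp: s_def\<close>)
    also have "(A^2) powr (p/2 - 1) = A powr (p - 2)"
      using sq_powr[of A "p - 2"] Ap by (simp add: diff_divide_distrib)
    also have "(A^2) powr (p/2) = A powr p" using sq_powr Ap by simp
    finally have T: "cmod (a + b) powr p \<le> A powr p + p * A powr (p - 2) * Re (cnj a * b)
        + (p/2) * (A powr (p - 2) * B^2)"
      by (simp add: s_eq algebra_simps)
    have R: "A powr (p - 2) * B^2 \<le> B powr p"
    proof (cases "B = 0")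
      case True then show ?thesis by simp
    next
      case False
      then have Bp: "0 < B" using B0 by simp
      have "A powr (p - 2) \<le> B powr (p - 2)"
        by (rule powr_mono2') (use p Bp True in auto)
      then have "A powr (p - 2) * B^2 \<le> B powr (p - 2) * B powr 2"
        using Bp by (simp add: mult_right_mono)
      also have "\<dots> = B powr p" by (simp add: powr_add[symmetric])
      finally show ?thesis .
    qed
    have "(p/2) * (A powr (p - 2) * B^2) \<le> 1 * B powr p"
      by (rule mult_mono) (use p R in auto)
    then show ?thesis using T lin powr_ge_zero[of B p] unfolding A_def B_def by linarith
  next
    case False
    have "cmod (a + b) \<le> 2 * B"
      using norm_triangle_ineq[of a b] False by (simp add: A_def B_def)
    then have "cmod (a + b) powr p \<le> (2 * B) powr p"
      using powr_mono2[of p "cmod (a + b)" "2 * B"] p by simp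
    also have "\<dots> = 2 powr p * B powr p" using B0 by (simp add: powr_mult)
    also have "\<dots> \<le> 4 * B powr p"
    proof -
      have "2 powr p \<le> 2 powr (2::real)" using p by (subst powr_le_cancel_iff) auto
      then show ?thesis by (simp add: mult_right_mono)
    qed
    finally have T: "cmod (a + b) powr p \<le> 4 * B powr p" .
    have "A powr (p - 2) * \<bar>Re (cnj a * b)\<bar> \<le> A powr (p - 2) * (A * B)"
      by (rule mult_left_mono[OF RB]) simp
    also have "\<dots> = A powr (p - 1) * B"
      using Ap powr_add[of A "p - 2" 1] by simp
    also have "\<dots> \<le> B powr (p - 1) * B"
      by (rule mult_right_mono, rule powr_mono2) (use p False Ap B0 in auto)
    also have "\<dots> = B powr p"
      using powr_add[of B "p - 1" 1] B0 False Ap by simp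
    finally have L: "A powr (p - 2) * \<bar>Re (cnj a * b)\<bar> \<le> B powr p" .
    have "- (p * A powr (p - 2) * Re (cnj a * b)) \<le> p * (A powr (p - 2) * \<bar>Re (cnj a * b)\<bar>)"
    proof -
      have h: "-(A powr (p - 2) * Re (cnj a * b)) \<le> A powr (p - 2) * \<bar>Re (cnj a * b)\<bar>"
        using abs_ge_minus_self[of "A powr (p - 2) * Re (cnj a * b)"] by (simp only: abs_mult abs_of_nonneg[OF powr_ge_zero])
      have "p * (-(A powr (p - 2) * Re (cnj a * b))) \<le> p * (A powr (p - 2) * \<bar>Re (cnj a * b)\<bar>)"
        using mult_left_mono[OF h, of p] p by linarith
      then show ?thesis by (simp only: mult.assoc mult_minus_right)
    qed
    also have "\<dots> \<le> 2 * B powr p"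
      using mult_mono[OF p(2) L] p by simp
    finally have "- (p * A powr (p - 2) * Re (cnj a * b)) \<le> 2 * B powr p" .
    moreover have "0 \<le> A powr p" by simp
    ultimately show ?thesis using T lin unfolding A_def B_def by linarith
  qed
qed

lemma holder_aux:
  fixes H g :: "'k \<Rightarrow> real" and q :: real
  assumes fin: "finite I" and ne: "I \<noteq> {}" and Hp: "\<And>k. k \<in> I \<Longrightarrow> 0 < H k"
    and g0: "\<And>k. k \<in> I \<Longrightarrow> 0 \<le> g k" and q: "1 \<le> q"
  shows "(\<Sum>k\<in>I. H k powr (q - 1) * g k)
     \<le> (\<Sum>k\<in>I. H k powr q) powr (1 - 1/q) * (\<Sum>k\<in>I. g k powr q) powr (1/q)"
proof -
  define G where "G = (\<Sum>k\<in>I. H k powr q)"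
  define Y where "Y = (\<Sum>k\<in>I. g k powr q)"
  define \<theta> where "\<theta> = 1 - 1/q"
  have Gp: "0 < G" unfolding G_def using fin ne Hp by (intro sum_pos) (auto simp: less_imp_neq[symmetric])
  have Y0: "0 \<le> Y" unfolding Y_def by (intro sum_nonneg) auto
  have th: "0 \<le> \<theta>" "\<theta> + 1/q = 1" "0 \<le> 1/q" using q by (auto simp: \<theta>_def)
  show ?thesis
  proof (cases "Y = 0")
    case True
    then have "\<forall>k\<in>I. g k powr q = 0" unfolding Y_def using fin
      by (subst sum_nonneg_eq_0_iff[symmetric]) auto
    then have "\<forall>k\<in>I. g k = 0" by simp
    then show ?thesis by simp
  next
    case False
    with Y0 have Yp: "0 < Y" by simp
    have trm: "H k powr (q - 1) * g k \<le> G powr \<theta> * Y powr (1/q) * (\<theta> * (H k powr q / G) + 1/q * (g k powr q / Y))"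
      if k: "k \<in> I" for k
    proof (cases "g k = 0")
      case True
      have "0 \<le> G powr \<theta> * Y powr (1/q) * (\<theta> * (H k powr q / G) + 1/q * (g k powr q / Y))"
        using th Gp Yp by (intro mult_nonneg_nonneg add_nonneg_nonneg) auto
      then show ?thesis using True by simp
    next
      case False
      have gp: "0 < g k" using False g0[OF k] by simp
      have hp: "0 < H k" using Hp[OF k] .
      have Yg: "(H k powr q / G) powr \<theta> * (g k powr q / Y) powr (1/q) \<le> \<theta> * (H k powr q / G) + 1/q * (g k powr q / Y)"
        by (rule Youngs_inequality_0) (use th Gp Yp gp hp in auto)
      have e1: "(H k powr q / G) powr \<theta> = H k powr (q - 1) / G powr \<theta>"
        using hp Gp q by (simp add: powr_divide powr_powr \<theta>_def algebra_simps)
      have e2: "(g k powr q / Y) powr (1/q) = g k / Y powr (1/q)"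
        using gp Yp q by (simp add: powr_divide powr_powr)
      have "H k powr (q - 1) * g k = G powr \<theta> * Y powr (1/q) * ((H k powr q / G) powr \<theta> * (g k powr q / Y) powr (1/q))"
        unfolding e1 e2 using Gp Yp by (simp add: field_simps)
      also have "\<dots> \<le> G powr \<theta> * Y powr (1/q) * (\<theta> * (H k powr q / G) + 1/q * (g k powr q / Y))"
        by (rule mult_left_mono[OF Yg]) simp
      finally show ?thesis .
    qed
    have "(\<Sum>k\<in>I. H k powr (q - 1) * g k) \<le> (\<Sum>k\<in>I. G powr \<theta> * Y powr (1/q) * (\<theta> * (H k powr q / G) + 1/q * (g k powr q / Y)))"
      by (rule sum_mono) (rule trm)
    also have "\<dots> = G powr \<theta> * Y powr (1/q) * (\<Sum>k\<in>I. \<theta> * (H k powr q / G) + 1/q * (g k powr q / Y))"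
      by (simp add: sum_distrib_left)
    also have "(\<Sum>k\<in>I. \<theta> * (H k powr q / G) + 1/q * (g k powr q / Y)) = \<theta> * (G / G) + 1/q * (Y / Y)"
      unfolding sum.distrib sum_distrib_left[symmetric] sum_divide_distrib[symmetric]
      unfolding G_def Y_def ..
    also have "G powr \<theta> * Y powr (1/q) * (\<theta> * (G / G) + 1/q * (Y / Y)) = G powr \<theta> * Y powr (1/q)" using Gp Yp th by simp
    finally show ?thesis by (simp add: G_def Y_def \<theta>_def)
  qed
qed

lemma sq_powr2: "0 \<le> (x::real) \<Longrightarrow> (x^2) powr q = x powr (2 * q)"
  by (simp add: powr_powr flip: powr_numeral)

lemma smooth2:
  fixes x y :: "'k \<Rightarrow> complex" and q \<epsilon> :: real
  assumes fin: "finite I" and ne: "I \<noteq> {}" and q1: "1 \<le> q" and \<epsilon>: "0 < \<epsilon>"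
  shows "(\<Sum>k\<in>I. cmod (x k + y k) powr (2*q)) powr (1/q)
     \<le> (\<Sum>k\<in>I. (cmod (x k)^2 + \<epsilon>) powr q) powr (1/q)
       + (\<Sum>k\<in>I. (cmod (x k)^2 + \<epsilon>) powr q) powr (1/q - 1) *
           (\<Sum>k\<in>I. (cmod (x k)^2 + \<epsilon>) powr (q - 1) * (2 * Re (cnj (x k) * y k)))
       + (2*q - 1) * (\<Sum>k\<in>I. cmod (y k) powr (2*q)) powr (1/q)"
proof -
  define \<alpha> where "\<alpha> k = cmod (x k)^2 + \<epsilon>" for k
  define \<beta> where "\<beta> k = Re (cnj (x k) * y k)" for k
  define \<gamma> where "\<gamma> k = cmod (y k)^2" for k
  define H where "H k t = \<alpha> k + 2*\<beta> k*t + \<gamma> k*t^2" for k t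
  define H' where "H' k t = 2*\<beta> k + 2*\<gamma> k*t" for k t
  have H_eq: "H k t = cmod (x k + complex_of_real t * y k)^2 + \<epsilon>" for k t
    by (simp add: H_def \<alpha>_def \<beta>_def \<gamma>_def cmod_add_sq norm_mult power_mult_distrib algebra_simps)
  have Hp: "0 < H k t" for k t
    unfolding H_eq using \<epsilon> by (simp add: add_nonneg_pos)
  have g0: "0 \<le> \<gamma> k" for k by (simp add: \<gamma>_def)
  have HH: "H' k t * H' k t \<le> 4 * H k t * \<gamma> k" for k t
  proof -
    have "\<bar>\<beta> k\<bar> \<le> cmod (x k) * cmod (y k)" unfolding \<beta>_def by (rule Re_cnj_le)
    then have "(\<beta> k)^2 \<le> (cmod (x k) * cmod (y k))^2"
      by (metis abs_ge_zero power2_abs power_mono)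
    then have "(\<beta> k)^2 \<le> \<alpha> k * \<gamma> k"
    proof -
      have "0 \<le> \<epsilon> * (cmod (y k))^2" using \<epsilon> by simp
      then show ?thesis using \<open>(\<beta> k)^2 \<le> _\<close>
        by (simp add: \<alpha>_def \<gamma>_def power_mult_distrib algebra_simps)
    qed
    then show ?thesis by (simp add: H_def H'_def power2_eq_square algebra_simps)
  qed
  define G where "G t = (\<Sum>k\<in>I. H k t powr q)" for t
  define G' where "G' t = (\<Sum>k\<in>I. q * H k t powr (q - 1) * H' k t)" for t
  define G'' where "G'' t = (\<Sum>k\<in>I. q * ((q - 1) * H k t powr (q - 2) * H' k t * H' k t + H k t powr (q - 1) * (2 * \<gamma> k)))" for t
  define g where "g t = G t powr (1/q)" for t
  define g' where "g' t = 1/q * G t powr (1/q - 1) * G' t" for t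
  define g'' where "g'' t = 1/q * ((1/q - 1) * G t powr (1/q - 2) * G' t * G' t + G t powr (1/q - 1) * G'' t)" for t
  have Gp: "0 < G t" for t
    unfolding G_def using fin ne Hp by (intro sum_pos) (auto simp: less_imp_neq[symmetric])
  have DH: "DERIV (\<lambda>t. H k t) t :> H' k t" for k t
    unfolding H_def H'_def by (auto intro!: derivative_eq_intros)
  have DH': "DERIV (\<lambda>t. H' k t) t :> 2 * \<gamma> k" for k t
    unfolding H'_def by (auto intro!: derivative_eq_intros)
  have DHq: "DERIV (\<lambda>t. H k t powr q) t :> q * H k t powr (q - 1) * H' k t" for k t
    using DERIV_fun_powr[OF DH Hp, where r=q] by simp
  have DHq': "DERIV (\<lambda>t. q * H k t powr (q - 1) * H' k t) t :>
      q * ((q - 1) * H k t powr (q - 2) * H' k t * H' k t + H k t powr (q - 1) * (2 * \<gamma> k))" for k t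
    by (rule DERIV_cong[OF DERIV_mult[OF DERIV_cmult[OF DERIV_fun_powr[OF DH Hp, where r="q - 1"]] DH']])
       (simp add: algebra_simps)
  have DG: "DERIV G t :> G' t" for t
    unfolding G_def G'_def by (rule DERIV_sum) (rule DHq)
  have DG': "DERIV G' t :> G'' t" for t
    unfolding G'_def G''_def by (rule DERIV_sum) (rule DHq')
  have geq: "g = (\<lambda>t. G t powr (1/q))" by (rule ext) (simp add: g_def)
  have g'eq: "g' = (\<lambda>t. 1/q * G t powr (1/q - 1) * G' t)" by (rule ext) (simp add: g'_def)
  have Dg: "DERIV g t :> g' t" for t
    using DERIV_fun_powr[OF DG Gp, where r="1/q"] by (simp add: geq g'_def)
  have Dg': "DERIV g' t :> g'' t" for t
    unfolding g'eq g''_def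
    by (rule DERIV_cong[OF DERIV_mult[OF DERIV_cmult[OF DERIV_fun_powr[OF DG Gp, where r="1/q - 1"]] DG']])
       (simp add: algebra_simps)
  define diff where "diff m = (if m = 0 then g else if m = 1 then g' else g'')" for m :: nat
  have dd: "\<forall>m t. m < 2 \<and> 0 \<le> t \<and> t \<le> 1 \<longrightarrow> DERIV (diff m) t :> diff (Suc m) t"
  proof (intro allI impI)
    fix m :: nat and t :: real assume "m < 2 \<and> 0 \<le> t \<and> t \<le> 1"
    then have "m = 0 \<or> m = 1" by auto
    then show "DERIV (diff m) t :> diff (Suc m) t" using Dg Dg' by (auto simp: diff_def)
  qed
  obtain t where "g 1 = (\<Sum>m<2. diff m 0 / fact m * 1 ^ m) + diff 2 t / fact 2 * 1 ^ 2"
    using Maclaurin[of 1 2 diff g, OF _ _ _ dd] by (auto simp: diff_def)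
  then have Mac: "g 1 = g 0 + g' 0 + g'' t / 2"
    by (simp add: diff_def numeral_2_eq_2)
  define Y where "Y = (\<Sum>k\<in>I. \<gamma> k powr q)"
  have Y0: "0 \<le> Y" unfolding Y_def by (intro sum_nonneg) auto
  have bound: "g'' t \<le> (4*q - 2) * Y powr (1/q)"
  proof -
    have A1: "(1/q - 1) * G t powr (1/q - 2) * G' t * G' t \<le> 0"
    proof -
      have "0 \<le> G t powr (1/q - 2) * (G' t * G' t)" by simp
      moreover have "1/q - 1 \<le> 0" using q1 by simp
      ultimately show ?thesis by (simp add: mult_nonpos_nonneg mult.assoc)
    qed
    have trm: "q * ((q - 1) * H k t powr (q - 2) * H' k t * H' k t + H k t powr (q - 1) * (2 * \<gamma> k))
        \<le> q * (4*q - 2) * (H k t powr (q - 1) * \<gamma> k)" for k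
    proof -
      have e: "H k t powr (q - 2) * H k t = H k t powr (q - 1)"
        using powr_add[of "H k t" "q - 2" 1] Hp[of k t] by simp
      have "(q - 1) * H k t powr (q - 2) * (H' k t * H' k t) \<le> (q - 1) * H k t powr (q - 2) * (4 * H k t * \<gamma> k)"
        by (rule mult_left_mono[OF HH]) (use q1 in simp)
      also have "\<dots> = 4 * (q - 1) * ((H k t powr (q - 2) * H k t) * \<gamma> k)"
        by (simp only: mult_ac)
      also have "\<dots> = 4 * (q - 1) * (H k t powr (q - 1) * \<gamma> k)"
        by (simp only: e)
      finally have "(q - 1) * H k t powr (q - 2) * H' k t * H' k t + H k t powr (q - 1) * (2 * \<gamma> k)
          \<le> (4*q - 2) * (H k t powr (q - 1) * \<gamma> k)"
        by (simp add: algebra_simps)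
      then show ?thesis using q1 by (simp add: mult.assoc mult_left_mono)
    qed
    have "G'' t \<le> (\<Sum>k\<in>I. q * (4*q - 2) * (H k t powr (q - 1) * \<gamma> k))"
      unfolding G''_def by (rule sum_mono) (rule trm)
    also have "\<dots> = q * (4*q - 2) * (\<Sum>k\<in>I. H k t powr (q - 1) * \<gamma> k)"
      by (simp add: sum_distrib_left)
    also have "\<dots> \<le> q * (4*q - 2) * (G t powr (1 - 1/q) * Y powr (1/q))"
      unfolding G_def Y_def
      by (rule mult_left_mono, rule holder_aux) (use fin ne Hp g0 q1 in auto)
    finally have G2: "G'' t \<le> q * (4*q - 2) * (G t powr (1 - 1/q) * Y powr (1/q))" .
    have "g'' t \<le> 1/q * (0 + G t powr (1/q - 1) * G'' t)"
      unfolding g''_def using A1 q1 by (intro mult_left_mono add_right_mono) auto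
    also have "\<dots> \<le> 1/q * (G t powr (1/q - 1) * (q * (4*q - 2) * (G t powr (1 - 1/q) * Y powr (1/q))))"
      using G2 q1 by (intro mult_left_mono) (auto intro: mult_left_mono)
    also have "\<dots> = (4*q - 2) * Y powr (1/q) * (G t powr (1/q - 1) * G t powr (1 - 1/q))"
      using q1 by (simp add: field_simps)
    also have "G t powr (1/q - 1) * G t powr (1 - 1/q) = 1"
      using Gp[of t] by (simp add: powr_add[symmetric])
    finally show ?thesis by simp
  qed
  have LHS: "(\<Sum>k\<in>I. cmod (x k + y k) powr (2*q)) powr (1/q) \<le> g 1"
  proof -
    have "(\<Sum>k\<in>I. cmod (x k + y k) powr (2*q)) \<le> G 1"
      unfolding G_def
    proof (rule sum_mono)
      fix k assume "k \<in> I"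
      have "cmod (x k + y k) powr (2*q) = (cmod (x k + y k)^2) powr q" by (simp add: sq_powr2)
      also have "\<dots> \<le> H k 1 powr q"
        by (rule powr_mono2) (use q1 \<epsilon> in \<open>auto simp: H_eq\<close>)
      finally show "cmod (x k + y k) powr (2*q) \<le> H k 1 powr q" .
    qed
    then show ?thesis unfolding g_def
      by (rule powr_mono2[rotated 2]) (use q1 in \<open>auto intro: sum_nonneg\<close>)
  qed
  have g0e: "g 0 = (\<Sum>k\<in>I. (cmod (x k)^2 + \<epsilon>) powr q) powr (1/q)"
    by (simp add: g_def G_def H_def \<alpha>_def)
  have g'0e: "g' 0 = (\<Sum>k\<in>I. (cmod (x k)^2 + \<epsilon>) powr q) powr (1/q - 1) *
           (\<Sum>k\<in>I. (cmod (x k)^2 + \<epsilon>) powr (q - 1) * (2 * Re (cnj (x k) * y k)))"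
    using q1 by (simp add: g'_def G_def G'_def H_def H'_def \<alpha>_def \<beta>_def sum_distrib_left[symmetric] mult.assoc)
  have Ye: "Y = (\<Sum>k\<in>I. cmod (y k) powr (2*q))"
    unfolding Y_def \<gamma>_def by (simp add: sq_powr2)
  show ?thesis
    using LHS Mac bound g0e g'0e Ye by (simp add: algebra_simps)
qed

lemma swap_lin:
  fixes x :: "'k \<Rightarrow> complex" and y :: "'s \<Rightarrow> 'k \<Rightarrow> complex" and c :: "'k \<Rightarrow> real"
  shows "(\<Sum>s\<in>F. u s * (\<Sum>k\<in>I. c k * (2 * Re (cnj (x k) * y s k))))
       = (\<Sum>k\<in>I. c k * (2 * Re (cnj (x k) * (\<Sum>s\<in>F. u s *\<^sub>R y s k))))"
proof -
  have "(\<Sum>s\<in>F. u s * (\<Sum>k\<in>I. c k * (2 * Re (cnj (x k) * y s k))))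
      = (\<Sum>s\<in>F. \<Sum>k\<in>I. c k * (2 * (u s * Re (cnj (x k) * y s k))))"
    by (simp add: sum_distrib_left mult_ac)
  also have "\<dots> = (\<Sum>k\<in>I. \<Sum>s\<in>F. c k * (2 * (u s * Re (cnj (x k) * y s k))))"
    by (rule sum.swap)
  also have "\<dots> = (\<Sum>k\<in>I. c k * (2 * Re (cnj (x k) * (\<Sum>s\<in>F. u s *\<^sub>R y s k))))"
    by (simp add: sum_distrib_left Re_sum scaleR_conv_of_real algebra_simps)
  finally show ?thesis .
qed

lemma smooth2_avg:
  fixes x :: "'k \<Rightarrow> complex" and y :: "'s \<Rightarrow> 'k \<Rightarrow> complex" and q :: real
  assumes fin: "finite I" and ne: "I \<noteq> {}" and q1: "1 \<le> q"
    and u0: "\<And>s. s \<in> F \<Longrightarrow> 0 \<le> u s" and u1: "sum u F = 1"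
    and mean: "\<And>k. k \<in> I \<Longrightarrow> (\<Sum>s\<in>F. u s *\<^sub>R y s k) = 0"
  shows "(\<Sum>s\<in>F. u s * (\<Sum>k\<in>I. cmod (x k + y s k) powr (2*q)) powr (1/q))
     \<le> (\<Sum>k\<in>I. cmod (x k) powr (2*q)) powr (1/q)
       + (2*q - 1) * (\<Sum>s\<in>F. u s * (\<Sum>k\<in>I. cmod (y s k) powr (2*q)) powr (1/q))"
proof -
  define T where "T = (\<Sum>s\<in>F. u s * (\<Sum>k\<in>I. cmod (x k + y s k) powr (2*q)) powr (1/q))"
  define R where "R = (2*q - 1) * (\<Sum>s\<in>F. u s * (\<Sum>k\<in>I. cmod (y s k) powr (2*q)) powr (1/q))"
  define Ge where "Ge e = (\<Sum>k\<in>I. (cmod (x k)^2 + e) powr q)" for e :: real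
  have main: "T \<le> Ge e powr (1/q) + R" if e: "0 < e" for e
  proof -
    define c where "c k = (cmod (x k)^2 + e) powr (q - 1)" for k
    define L where "L s = Ge e powr (1/q - 1) * (\<Sum>k\<in>I. c k * (2 * Re (cnj (x k) * y s k)))" for s
    have "T \<le> (\<Sum>s\<in>F. u s * (Ge e powr (1/q) + L s + (2*q - 1) * (\<Sum>k\<in>I. cmod (y s k) powr (2*q)) powr (1/q)))"
      unfolding T_def
    proof (rule sum_mono, rule mult_left_mono)
      fix s assume "s \<in> F"
      show "(\<Sum>k\<in>I. cmod (x k + y s k) powr (2*q)) powr (1/q)
          \<le> Ge e powr (1/q) + L s + (2*q - 1) * (\<Sum>k\<in>I. cmod (y s k) powr (2*q)) powr (1/q)"
        unfolding Ge_def L_def c_def by (rule smooth2[OF fin ne q1 e])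
      show "0 \<le> u s" using u0 \<open>s \<in> F\<close> .
    qed
    also have "\<dots> = sum u F * Ge e powr (1/q) + (\<Sum>s\<in>F. u s * L s) + R"
      unfolding distrib_left sum.distrib R_def
      by (simp add: sum_distrib_left sum_distrib_right mult_ac)
    also have "(\<Sum>s\<in>F. u s * L s) = 0"
    proof -
      have "(\<Sum>s\<in>F. u s * L s) = Ge e powr (1/q - 1) *
          (\<Sum>s\<in>F. u s * (\<Sum>k\<in>I. c k * (2 * Re (cnj (x k) * y s k))))"
        by (simp add: L_def sum_distrib_left mult_ac)
      also have "\<dots> = 0" by (subst swap_lin) (simp add: mean cong: sum.cong)
      finally show ?thesis .
    qed
    finally show ?thesis using u1 by simp
  qed
  have lim: "((\<lambda>e. Ge e powr (1/q) + R) \<longlongrightarrow> Ge 0 powr (1/q) + R) (at_right 0)"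
    unfolding Ge_def
    using q1 by (intro tendsto_intros tendsto_powr') (auto intro!: sum_nonneg eventually_at_rightI[of 0 1])
  have "T \<le> Ge 0 powr (1/q) + R"
    by (rule tendsto_le[OF _ lim tendsto_const]) (auto intro!: eventually_at_rightI[of 0 1] main)
  moreover have "Ge 0 = (\<Sum>k\<in>I. cmod (x k) powr (2*q))" by (simp add: Ge_def sq_powr2)
  ultimately show ?thesis by (simp add: T_def R_def)
qed

lemma scalar_le2_avg:
  fixes a :: complex and y :: "'s \<Rightarrow> complex" and p :: real
  assumes p: "1 < p" "p \<le> 2"
    and u0: "\<And>s. s \<in> F \<Longrightarrow> 0 \<le> u s" and u1: "sum u F = 1"
    and mean: "(\<Sum>s\<in>F. u s *\<^sub>R y s) = 0"
  shows "(\<Sum>s\<in>F. u s * cmod (a + y s) powr p) \<le> cmod a powr p + 6 * (\<Sum>s\<in>F. u s * cmod (y s) powr p)"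
proof -
  have "(\<Sum>s\<in>F. u s * cmod (a + y s) powr p) \<le> (\<Sum>s\<in>F. u s * (cmod a powr p + lin1 p a (y s) + 6 * cmod (y s) powr p))"
    by (rule sum_mono, rule mult_left_mono[OF scalar_le2[OF p]]) (use u0 in auto)
  also have "\<dots> = sum u F * cmod a powr p + (\<Sum>s\<in>F. u s * lin1 p a (y s)) + 6 * (\<Sum>s\<in>F. u s * cmod (y s) powr p)"
    unfolding distrib_left sum.distrib by (simp add: sum_distrib_left sum_distrib_right mult_ac)
  also have "(\<Sum>s\<in>F. u s * lin1 p a (y s)) = 0"
  proof (cases "a = 0")
    case True then show ?thesis by (simp add: lin1_def)
  next
    case False
    have "(\<Sum>s\<in>F. u s * lin1 p a (y s)) = p * cmod a powr (p - 2) * Re (cnj a * (\<Sum>s\<in>F. u s *\<^sub>R y s))"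
      using False by (simp add: lin1_def sum_distrib_left Re_sum scaleR_conv_of_real algebra_simps)
    then show ?thesis by (simp add: mean)
  qed
  finally show ?thesis using u1 by simp
qed

lemma le2_avg:
  fixes x :: "'k \<Rightarrow> complex" and y :: "'s \<Rightarrow> 'k \<Rightarrow> complex" and p :: real
  assumes p: "1 < p" "p \<le> 2"
    and u0: "\<And>s. s \<in> F \<Longrightarrow> 0 \<le> u s" and u1: "sum u F = 1"
    and mean: "\<And>k. k \<in> I \<Longrightarrow> (\<Sum>s\<in>F. u s *\<^sub>R y s k) = 0"
  shows "(\<Sum>s\<in>F. u s * (\<Sum>k\<in>I. cmod (x k + y s k) powr p))
     \<le> (\<Sum>k\<in>I. cmod (x k) powr p) + 6 * (\<Sum>s\<in>F. u s * (\<Sum>k\<in>I. cmod (y s k) powr p))"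
proof -
  have "(\<Sum>s\<in>F. u s * (\<Sum>k\<in>I. cmod (x k + y s k) powr p)) = (\<Sum>k\<in>I. \<Sum>s\<in>F. u s * cmod (x k + y s k) powr p)"
    by (simp add: sum_distrib_left sum.swap[of _ F])
  also have "\<dots> \<le> (\<Sum>k\<in>I. cmod (x k) powr p + 6 * (\<Sum>s\<in>F. u s * cmod (y s k) powr p))"
    by (rule sum_mono, rule scalar_le2_avg[OF p u0 u1 mean]) auto
  also have "\<dots> = (\<Sum>k\<in>I. cmod (x k) powr p) + 6 * (\<Sum>s\<in>F. u s * (\<Sum>k\<in>I. cmod (y s k) powr p))"
    by (simp add: sum.distrib sum_distrib_left sum.swap[of _ F])
  finally show ?thesis .
qed

lemma greedy:
  fixes \<Phi> :: "'a::ab_group_add \<Rightarrow> real" and A :: 'a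
  assumes fin: "finite F" and ne: "F \<noteq> {}" and u0: "\<And>s. s \<in> F \<Longrightarrow> 0 \<le> u s" and u1: "sum u F = 1"
    and step: "\<And>e. (\<Sum>s\<in>F. u s * \<Phi> (e + (A - s))) \<le> \<Phi> e + K"
    and \<Phi>0: "\<Phi> 0 = 0"
  shows "\<exists>X. (\<forall>i. X i \<in> F) \<and> (\<forall>k. \<Phi> (\<Sum>i=1..k. (A - X i)) \<le> real k * K)"
proof -
  define pick where "pick e = (SOME s. s \<in> F \<and> (\<forall>t\<in>F. \<Phi> (e + (A - s)) \<le> \<Phi> (e + (A - t))))" for e
  have pick: "pick e \<in> F \<and> (\<forall>t\<in>F. \<Phi> (e + (A - pick e)) \<le> \<Phi> (e + (A - t)))" for e
  proof -
    define f where "f t = \<Phi> (e + (A - t))" for t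
    obtain s where s: "s \<in> F" "f s = Min (f ` F)"
    proof -
      have "Min (f ` F) \<in> f ` F" using fin ne by (intro Min_in) auto
      then show ?thesis using that by (metis imageE)
    qed
    have "\<forall>t\<in>F. f s \<le> f t" using s fin by simp
    then have "\<exists>s. s \<in> F \<and> (\<forall>t\<in>F. \<Phi> (e + (A - s)) \<le> \<Phi> (e + (A - t)))"
      using s(1) unfolding f_def by blast
    then show ?thesis unfolding pick_def by (rule someI_ex)
  qed
  define E where "E = rec_nat 0 (\<lambda>k e. e + (A - pick e))"
  have E0: "E 0 = 0" and ES: "E (Suc k) = E k + (A - pick (E k))" for k
    by (simp_all add: E_def)
  define X where "X i = pick (E (i - 1))" for i
  have XF: "\<forall>i. X i \<in> F" using pick by (simp add: X_def)
  have sumE: "(\<Sum>i=1..k. (A - X i)) = E k" for k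
    by (induction k) (simp_all add: E0 ES X_def)
  have bnd: "\<Phi> (E k) \<le> real k * K" for k
  proof (induction k)
    case 0 then show ?case by (simp add: E0 \<Phi>0)
  next
    case (Suc k)
    have "\<Phi> (E (Suc k)) = (\<Sum>t\<in>F. u t * \<Phi> (E k + (A - pick (E k))))"
      by (simp add: ES sum_distrib_right[symmetric] u1)
    also have "\<dots> \<le> (\<Sum>t\<in>F. u t * \<Phi> (E k + (A - t)))"
      by (rule sum_mono, rule mult_left_mono) (use pick u0 in auto)
    also have "\<dots> \<le> \<Phi> (E k) + K" by (rule step)
    finally show ?case using Suc by (simp add: algebra_simps)
  qed
  show ?thesis using XF sumE bnd by metis
qed

definition ent :: "complex ^ 'n ^ 'n \<Rightarrow> 'n \<times> 'n \<Rightarrow> complex" where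
  "ent z k = z $ fst k $ snd k"

definition Psum :: "real \<Rightarrow> complex ^ 'n ^ 'n \<Rightarrow> real" where
  "Psum p z = (\<Sum>k\<in>UNIV. cmod (ent z k) powr p)"

lemma lp_Psum: "lp_norm p z = Psum p z powr (1/p)"
  unfolding lp_norm_def Psum_def ent_def
  by (simp add: sum.cartesian_product case_prod_beta)

lemma ent_simps [simp]:
  "ent (a + b) k = ent a k + ent b k"
  "ent (a - b) k = ent a k - ent b k"
  "ent (c *\<^sub>R a) k = c *\<^sub>R ent a k"
  "ent 0 k = 0"
  "ent (sum f F) k = (\<Sum>x\<in>F. ent (f x) k)"
  by (simp_all add: ent_def)

lemma Psum_nonneg [simp]: "0 \<le> Psum p z"
  unfolding Psum_def by (intro sum_nonneg) auto

lemma lp_nonneg [simp]: "0 \<le> lp_norm p z"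
  by (simp add: lp_Psum)

lemma lp_pow: "0 < p \<Longrightarrow> lp_norm p z powr p = Psum p z"
  by (simp add: lp_Psum powr_powr powr_one)

lemma lp_sq: "lp_norm p z ^ 2 = Psum p z powr (2/p)"
  by (simp add: lp_Psum powr_powr flip: powr_numeral)

lemma lp_zero: "0 < p \<Longrightarrow> lp_norm p 0 = 0"
  by (simp add: lp_Psum Psum_def)

lemma lp_scale: "0 < p \<Longrightarrow> lp_norm p (c *\<^sub>R z) = \<bar>c\<bar> * lp_norm p z"
proof -
  assume p: "0 < p"
  have "Psum p (c *\<^sub>R z) = \<bar>c\<bar> powr p * Psum p z"
    by (simp add: Psum_def sum_distrib_left powr_mult)
  then show ?thesis using p by (simp add: lp_Psum powr_mult powr_powr)
qed

lemma powr_convex0: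
  assumes "1 \<le> p" shows "convex_on {0..} (\<lambda>x::real. x powr p)"
proof (rule convex_on_linorderI)
  fix t x y :: real
  assume t: "0 < t" "t < 1" and x: "x \<in> {0..}" and y: "y \<in> {0..}" and xy: "x < y"
  show "((1 - t) *\<^sub>R x + t *\<^sub>R y) powr p \<le> (1 - t) * x powr p + t * y powr p"
  proof (cases "x = 0")
    case True
    have "(t * y) powr p = t powr p * y powr p" using t y by (simp add: powr_mult)
    also have "\<dots> \<le> t powr 1 * y powr p"
      by (rule mult_right_mono, rule powr_mono') (use t assms in auto)
    finally show ?thesis using True t by simp
  next
    case False
    then show ?thesis using convex_onD[OF powr_convex[OF assms], of t x y] t x y xy by auto
  qed
qed auto

lemma jensen_Psum:
  assumes p: "1 \<le> p" and fin: "finite F" and ne: "F \<noteq> {}"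
    and u0: "\<And>s. s \<in> F \<Longrightarrow> 0 \<le> u s" and u1: "sum u F = 1"
  shows "Psum p (\<Sum>t\<in>F. u t *\<^sub>R w t) \<le> (\<Sum>t\<in>F. u t * Psum p (w t))"
proof -
  have "Psum p (\<Sum>t\<in>F. u t *\<^sub>R w t) \<le> (\<Sum>k\<in>UNIV. \<Sum>t\<in>F. u t * cmod (ent (w t) k) powr p)"
    unfolding Psum_def
  proof (rule sum_mono)
    fix k
    have "cmod (ent (\<Sum>t\<in>F. u t *\<^sub>R w t) k) \<le> (\<Sum>t\<in>F. u t * cmod (ent (w t) k))"
      using norm_sum[of "\<lambda>t. u t *\<^sub>R ent (w t) k" F] u0 by (simp add: abs_of_nonneg cong: sum.cong)
    then have "cmod (ent (\<Sum>t\<in>F. u t *\<^sub>R w t) k) powr p \<le> (\<Sum>t\<in>F. u t * cmod (ent (w t) k)) powr p"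
      using p by (intro powr_mono2) auto
    also have "\<dots> \<le> (\<Sum>t\<in>F. u t * cmod (ent (w t) k) powr p)"
      using convex_on_sum[OF fin ne powr_convex0[OF p] u1, of "\<lambda>t. cmod (ent (w t) k)"] u0 by simp
    finally show "cmod (ent (\<Sum>t\<in>F. u t *\<^sub>R w t) k) powr p \<le> (\<Sum>t\<in>F. u t * cmod (ent (w t) k) powr p)" .
  qed
  also have "\<dots> = (\<Sum>t\<in>F. u t * Psum p (w t))"
    unfolding Psum_def by (simp add: sum_distrib_left sum.swap[of _ F])
  finally show ?thesis .
qed

lemma diam_upper:
  fixes S :: "(complex ^ 'n ^ 'n) set"
  assumes bS: "bounded S" and p: "0 < p" and x: "x \<in> S" and y: "y \<in> S"
  shows "lp_norm p (x - y) \<le> lp_diam p S"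
proof -
  obtain M where M: "\<forall>x\<in>S. norm x \<le> M" using bS by (auto simp: bounded_iff)
  have entle: "cmod (ent z k) \<le> norm z" for z :: "complex ^ 'n ^ 'n" and k
    unfolding ent_def by (rule order_trans[OF Finite_Cartesian_Product.norm_nth_le Finite_Cartesian_Product.norm_nth_le])
  define B where "B = (real CARD('n \<times> 'n) * (2 * M) powr p) powr (1/p)"
  have lpB: "lp_norm p (a - b) \<le> B" if "a \<in> S" "b \<in> S" for a b
  proof -
    have nb: "norm (a - b) \<le> 2 * M"
    proof -
      have "norm a \<le> M" "norm b \<le> M" using M that by auto
      then show ?thesis using norm_triangle_ineq4[of a b] by linarith
    qed
    have "Psum p (a - b) \<le> (\<Sum>k\<in>(UNIV :: ('n \<times> 'n) set). (2 * M) powr p)"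
      unfolding Psum_def
      by (rule sum_mono, rule powr_mono2) (use p entle[of "a - b"] nb in \<open>auto intro: order_trans\<close>)
    also have "\<dots> = real CARD('n \<times> 'n) * (2 * M) powr p" by simp
    finally show ?thesis unfolding lp_Psum B_def
      by (rule powr_mono2[rotated 2]) (use p in auto)
  qed
  have bin: "bdd_above ((\<lambda>b. lp_norm p (a - b)) ` S)" if "a \<in> S" for a
    by (rule bdd_aboveI2[of _ _ B]) (use lpB that in auto)
  have bout: "bdd_above ((\<lambda>a. SUP b\<in>S. lp_norm p (a - b)) ` S)"
    by (rule bdd_aboveI2[of _ _ B], rule cSUP_least) (use lpB in auto)
  have "lp_norm p (x - y) \<le> (SUP b\<in>S. lp_norm p (x - b))"
    by (rule cSUP_upper[OF y bin[OF x]])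
  also have "\<dots> \<le> (SUP a\<in>S. SUP b\<in>S. lp_norm p (a - b))"
    by (rule cSUP_upper[OF x bout])
  finally show ?thesis unfolding lp_diam_def .
qed

lemma avg_eq:
  fixes X :: "nat \<Rightarrow> 'a::real_vector"
  assumes "1 \<le> k"
  shows "A - (1 / real k) *\<^sub>R (\<Sum>i=1..k. X i) = (1 / real k) *\<^sub>R (\<Sum>i=1..k. (A - X i))"
  using assms by (simp add: sum_subtractf scaleR_diff_right sum_constant_scaleR)

lemma exp2_ge6: "6 \<le> exp (2::real)"
proof -
  have h: "1 + 1 + 1\<^sup>2 / 2 \<le> exp (1::real)" by (rule exp_lower_Taylor_quadratic) simp
  have h2: "5/2 \<le> exp (1::real)" using h by simp
  have "5/2 * (5/2) \<le> exp (1::real) * exp 1" by (rule mult_mono[OF h2 h2]) auto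
  then show ?thesis by (simp add: exp_add[symmetric])
qed

lemma const_p2:
  assumes k: "1 \<le> (k::real)"
  shows "sqrt (1/k) \<le> 2 * exp 2 / 2 powr (1/2) * k powr (1/2 - 1)"
proof -
  have kp: "0 < k" using k by simp
  have e1: "k powr (1/2 - 1) = inverse (sqrt k)"
    using kp by (simp add: powr_minus powr_half_sqrt flip: powr_minus_divide)
  have "sqrt 2 \<le> 2" by (simp add: real_sqrt_le_iff')
  also have "2 \<le> 2 * exp (2::real)" using exp2_ge6 by simp
  finally have c: "1 \<le> 2 * exp 2 / sqrt 2" by simp
  have "sqrt (1/k) = 1 * inverse (sqrt k)" by (simp add: real_sqrt_inverse flip: inverse_eq_divide)
  also have "\<dots> \<le> (2 * exp 2 / sqrt 2) * inverse (sqrt k)"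
    by (rule mult_right_mono[OF c]) (use kp in simp)
  finally show ?thesis using e1 by (simp add: powr_half_sqrt)
qed

lemma const_le2:
  assumes p: "1 < (p::real)" "p \<le> 2"
  shows "6 powr (1/p) \<le> 2 * exp 2 / p powr (1/p)"
proof -
  have "(6*p) powr (1/p) \<le> (6*p) powr 1"
    by (rule powr_mono) (use p in auto)
  also have "\<dots> \<le> 2 * exp 2" using p exp2_ge6 by simp
  finally have "6 powr (1/p) * p powr (1/p) \<le> 2 * exp 2" using p by (simp add: powr_mult)
  then show ?thesis using p by (simp add: le_divide_eq)
qed

lemma part1:
  fixes p :: real and S :: "(complex ^ 'n ^ 'n) set" and A :: "complex ^ 'n ^ 'n"
  assumes p: "p > 1" and bS: "bounded S" and A: "A \<in> convex hull S"
  shows "\<exists>X :: nat \<Rightarrow> complex ^ 'n ^ 'n. (\<forall>i\<ge>1. X i \<in> S) \<and>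
            (\<forall>k\<ge>1. (p \<le> 2 \<longrightarrow>
                 lp_norm p (A - (1 / real k) *\<^sub>R (\<Sum>i=1..k. X i))
                   \<le> 2 * exp 2 / p powr (1 / p) * real k powr (1 / p - 1) * lp_diam p S)
              \<and> (p \<ge> 2 \<longrightarrow>
                 lp_norm p (A - (1 / real k) *\<^sub>R (\<Sum>i=1..k. X i))
                   \<le> exp 2 * sqrt (2 * (p - 1) / real k) * lp_diam p S))"
proof -
  obtain F u where F: "finite F" "F \<subseteq> S" and u0: "\<forall>x\<in>F. 0 \<le> u x" and u1: "sum u F = 1"
    and uA: "(\<Sum>v\<in>F. u v *\<^sub>R v) = A"
    using A unfolding convex_hull_explicit by blast
  have u0': "\<And>s. s \<in> F \<Longrightarrow> 0 \<le> u s" using u0 by auto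
  have ne: "F \<noteq> {}" using u1 by auto
  define D where "D = lp_diam p S"
  have p0: "0 < p" using p by simp
  have AmS: "A - s = (\<Sum>t\<in>F. u t *\<^sub>R (t - s))" for s
    by (simp add: scaleR_diff_right sum_subtractf scaleR_sum_left[symmetric] u1 uA)
  have mean: "(\<Sum>s\<in>F. u s *\<^sub>R (A - s)) = 0"
    by (simp add: scaleR_diff_right sum_subtractf scaleR_sum_left[symmetric] u1 uA)
  have meank: "(\<Sum>s\<in>F. u s *\<^sub>R ent (A - s) k) = 0" for k
    using arg_cong[OF mean, of "\<lambda>z. ent z k"] by simp
  have diamF: "lp_norm p (t - s) \<le> D" if "t \<in> F" "s \<in> F" for t s
    unfolding D_def by (rule diam_upper[OF bS p0]) (use that F in auto)
  obtain s0 where s0: "s0 \<in> F" using ne by auto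
  have D0: "0 \<le> D" using diamF[OF s0 s0] lp_nonneg[of p "s0 - s0"] by linarith
  have FDp: "Psum p (A - s) \<le> D powr p" if s: "s \<in> F" for s
  proof -
    have "Psum p (A - s) \<le> (\<Sum>t\<in>F. u t * Psum p (t - s))"
      unfolding AmS by (rule jensen_Psum) (use p F(1) ne u0' u1 in auto)
    also have "\<dots> \<le> (\<Sum>t\<in>F. u t * D powr p)"
    proof (rule sum_mono, rule mult_left_mono)
      fix t assume t: "t \<in> F"
      show "Psum p (t - s) \<le> D powr p"
        unfolding lp_pow[OF p0, symmetric] by (rule powr_mono2) (use p diamF[OF t s] in auto)
      show "0 \<le> u t" using u0' t .
    qed
    also have "\<dots> = D powr p" by (simp add: sum_distrib_right[symmetric] u1)
    finally show ?thesis .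
  qed
  have FD: "lp_norm p (A - s) \<le> D" if s: "s \<in> F" for s
  proof -
    have "lp_norm p (A - s) \<le> (D powr p) powr (1/p)"
      unfolding lp_Psum by (rule powr_mono2) (use p FDp[OF s] in auto)
    also have "\<dots> = D" using p D0 by (simp add: powr_powr)
    finally show ?thesis .
  qed
  show ?thesis
  proof (cases "2 \<le> p")
    case True
    define \<Phi> where "\<Phi> z = lp_norm p z ^ 2" for z :: "complex ^ 'n ^ 'n"
    have conv: "\<Phi> z = (\<Sum>k\<in>UNIV. cmod (ent z k) powr (2*(p/2))) powr (1/(p/2))" for z
      by (simp add: \<Phi>_def lp_sq Psum_def)
    have step: "(\<Sum>s\<in>F. u s * \<Phi> (e + (A - s))) \<le> \<Phi> e + (p - 1) * D^2" for e
    proof -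
      have sm: "(\<Sum>s\<in>F. u s * (\<Sum>k\<in>UNIV. cmod (ent e k + ent (A - s) k) powr (2*(p/2))) powr (1/(p/2)))
          \<le> (\<Sum>k\<in>UNIV. cmod (ent e k) powr (2*(p/2))) powr (1/(p/2))
            + (2*(p/2) - 1) * (\<Sum>s\<in>F. u s * (\<Sum>k\<in>UNIV. cmod (ent (A - s) k) powr (2*(p/2))) powr (1/(p/2)))"
        by (rule smooth2_avg[where y = "\<lambda>s k. ent (A - s) k"]) (use True u0' u1 meank in auto)
      then have "(\<Sum>s\<in>F. u s * \<Phi> (e + (A - s))) \<le> \<Phi> e + (p - 1) * (\<Sum>s\<in>F. u s * \<Phi> (A - s))"
        unfolding conv by simp
      also have "(\<Sum>s\<in>F. u s * \<Phi> (A - s)) \<le> (\<Sum>s\<in>F. u s * D^2)"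
        by (rule sum_mono, rule mult_left_mono) (use FD u0' in \<open>auto simp: \<Phi>_def intro: power_mono\<close>)
      also have "(\<Sum>s\<in>F. u s * D^2) = D^2" by (simp add: sum_distrib_right[symmetric] u1)
      finally show ?thesis using True by simp
    qed
    obtain X where XF: "\<forall>i. X i \<in> F" and XE: "\<forall>k. \<Phi> (\<Sum>i=1..k. (A - X i)) \<le> real k * ((p - 1) * D^2)"
      using greedy[OF F(1) ne u0' u1 step] p0 by (auto simp: \<Phi>_def lp_zero)
    have main: "lp_norm p (A - (1 / real k) *\<^sub>R (\<Sum>i=1..k. X i)) \<le> sqrt ((p - 1) / real k) * D"
      if k: "1 \<le> k" for k
    proof -
      define E where "E = (\<Sum>i=1..k. (A - X i))"
      have kp: "0 < real k" using k by simp
      have err: "lp_norm p (A - (1 / real k) *\<^sub>R (\<Sum>i=1..k. X i)) = lp_norm p E / real k"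
        unfolding avg_eq[OF k] E_def using p0 by (simp add: lp_scale)
      have "(lp_norm p E / real k)^2 = lp_norm p E ^ 2 / (real k)^2" by (simp add: power_divide)
      also have "\<dots> \<le> real k * ((p - 1) * D^2) / (real k)^2"
        by (rule divide_right_mono) (use XE in \<open>auto simp: \<Phi>_def E_def\<close>)
      also have "\<dots> = (sqrt ((p - 1) / real k) * D)^2"
      proof -
        have sq: "(sqrt ((p - 1) / real k))^2 = (p - 1) / real k" using True kp by simp
        show ?thesis unfolding power_mult_distrib sq using kp by (simp add: power2_eq_square)
      qed
      finally show ?thesis unfolding err
        by (rule power2_le_imp_le) (use D0 True in auto)
    qed
    show ?thesis
    proof (intro exI conjI allI impI)
      fix i :: nat assume "1 \<le> i" then show "X i \<in> S" using XF F(2) by auto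
    next
      fix k :: nat assume k: "1 \<le> k"
      have "sqrt ((p - 1) / real k) * D \<le> exp 2 * sqrt (2 * (p - 1) / real k) * D"
      proof (rule mult_right_mono[OF _ D0])
        have "sqrt ((p - 1) / real k) \<le> sqrt (2 * (p - 1) / real k)"
          using True by (simp add: divide_right_mono)
        also have "\<dots> \<le> exp 2 * sqrt (2 * (p - 1) / real k)"
          using mult_right_mono[of 1 "exp 2" "sqrt (2 * (p - 1) / real k)"] exp2_ge6 True by simp
        finally show "sqrt ((p - 1) / real k) \<le> exp 2 * sqrt (2 * (p - 1) / real k)" .
      qed
      then show "lp_norm p (A - (1 / real k) *\<^sub>R (\<Sum>i=1..k. X i)) \<le> exp 2 * sqrt (2 * (p - 1) / real k) * lp_diam p S"
        using main[OF k] by (simp add: D_def)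
    next
      fix k :: nat assume k: "1 \<le> k" and p2: "p \<le> 2"
      have pe: "p = 2" using p2 True by simp
      have "sqrt ((p - 1) / real k) * D \<le> 2 * exp 2 / p powr (1 / p) * real k powr (1 / p - 1) * D"
        by (rule mult_right_mono[OF _ D0]) (use const_p2[of "real k"] k pe in auto)
      then show "lp_norm p (A - (1 / real k) *\<^sub>R (\<Sum>i=1..k. X i)) \<le> 2 * exp 2 / p powr (1 / p) * real k powr (1 / p - 1) * lp_diam p S"
        using main[OF k] by (simp add: D_def)
    qed
  next
    case False
    have p2: "p \<le> 2" using False by simp
    have step: "(\<Sum>s\<in>F. u s * Psum p (e + (A - s))) \<le> Psum p e + 6 * D powr p" for e
    proof -
      have "(\<Sum>s\<in>F. u s * Psum p (e + (A - s))) \<le> Psum p e + 6 * (\<Sum>s\<in>F. u s * Psum p (A - s))"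
        unfolding Psum_def using le2_avg[OF p p2 u0' u1, of UNIV "\<lambda>s k. ent (A - s) k" "ent e"] meank
        by simp
      also have "(\<Sum>s\<in>F. u s * Psum p (A - s)) \<le> (\<Sum>s\<in>F. u s * D powr p)"
        by (rule sum_mono, rule mult_left_mono) (use FDp u0' in auto)
      also have "(\<Sum>s\<in>F. u s * D powr p) = D powr p" by (simp add: sum_distrib_right[symmetric] u1)
      finally show ?thesis by simp
    qed
    obtain X where XF: "\<forall>i. X i \<in> F" and XE: "\<forall>k. Psum p (\<Sum>i=1..k. (A - X i)) \<le> real k * (6 * D powr p)"
      using greedy[OF F(1) ne u0' u1 step] by (auto simp: Psum_def)
    show ?thesis
    proof (intro exI conjI allI impI)
      fix i :: nat assume "1 \<le> i" then show "X i \<in> S" using XF F(2) by auto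
    next
      fix k :: nat assume "2 \<le> p" then show "lp_norm p (A - (1 / real k) *\<^sub>R (\<Sum>i=1..k. X i)) \<le> exp 2 * sqrt (2 * (p - 1) / real k) * lp_diam p S"
        using False by simp
    next
      fix k :: nat assume k: "1 \<le> k"
      define E where "E = (\<Sum>i=1..k. (A - X i))"
      have kp: "0 < real k" using k by simp
      have err: "lp_norm p (A - (1 / real k) *\<^sub>R (\<Sum>i=1..k. X i)) = Psum p E powr (1/p) / real k"
        unfolding avg_eq[OF k] E_def using p0 by (simp add: lp_scale, simp add: lp_Psum)
      also have "\<dots> \<le> (real k * (6 * D powr p)) powr (1/p) / real k"
        by (rule divide_right_mono, rule powr_mono2) (use XE p in \<open>auto simp: E_def\<close>)
      also have "\<dots> = 6 powr (1/p) * (real k powr (1/p) / real k) * D"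
        using D0 p by (simp add: powr_mult powr_powr)
      also have "real k powr (1/p) / real k = real k powr (1/p - 1)"
        using kp by (simp add: powr_diff)
      also have "6 powr (1/p) * real k powr (1/p - 1) * D \<le> 2 * exp 2 / p powr (1 / p) * real k powr (1 / p - 1) * D"
        by (intro mult_right_mono const_le2 p p2 D0) simp
      finally show "lp_norm p (A - (1 / real k) *\<^sub>R (\<Sum>i=1..k. X i)) \<le> 2 * exp 2 / p powr (1 / p) * real k powr (1 / p - 1) * lp_diam p S"
        by (simp add: D_def)
    qed
  qed
qed

lemma bound1_eps:
  fixes p c D \<epsilon> :: real and m :: nat
  assumes p: "1 < p" and D0: "0 \<le> D" and \<epsilon>: "0 < \<epsilon>" and c: "0 < c" and m1: "1 \<le> m"
    and mN: "c powr (p / (p - 1)) * (D / \<epsilon>) powr (p / (p - 1)) \<le> real m"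
  shows "c * real m powr (1 / p - 1) * D \<le> \<epsilon>"
proof (cases "D = 0")
  case True then show ?thesis using \<epsilon> by simp
next
  case False
  with D0 have Dp: "0 < D" by simp
  define z where "z = c * D / \<epsilon>"
  have zp: "0 < z" using c Dp \<epsilon> by (simp add: z_def)
  have mp: "0 < real m" using m1 by simp
  define r where "r = p / (p - 1)"
  have rp: "0 < r" using p by (simp add: r_def)
  have "z = c * (D / \<epsilon>)" by (simp add: z_def)
  then have "z powr r = c powr r * (D / \<epsilon>) powr r" using powr_mult[of c "D / \<epsilon>" r] c Dp \<epsilon> by simp
  then have "z powr r \<le> real m" using mN by (simp add: r_def)
  then have "(z powr r) powr (1/r) \<le> real m powr (1/r)"
    by (rule powr_mono2[rotated 2]) (use rp in auto)
  then have zm: "z \<le> real m powr (1/r)" using rp zp by (simp add: powr_powr)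
  have ir: "1/r = 1 - 1/p" using p by (simp add: r_def field_simps)
  have "real m powr (1/p - 1) = inverse (real m powr (1/r))"
    unfolding ir by (simp add: powr_minus[symmetric])
  then have "c * real m powr (1/p - 1) * D = c * D / real m powr (1/r)"
    by (simp add: divide_inverse mult_ac)
  also have "\<dots> \<le> c * D / z"
    by (rule divide_left_mono[OF zm]) (use c Dp zp mp in auto)
  also have "\<dots> = \<epsilon>" using c Dp \<epsilon> by (simp add: z_def)
  finally show ?thesis .
qed

lemma bound2_eps:
  fixes p D \<epsilon> e :: real and m :: nat
  assumes p: "1 \<le> p" and D0: "0 \<le> D" and \<epsilon>: "0 < \<epsilon>" and e: "0 \<le> e" and m1: "1 \<le> m"
    and mN: "2 * (p - 1) * e ^ 2 * (D / \<epsilon>)\<^sup>2 \<le> real m"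
  shows "e * sqrt (2 * (p - 1) / real m) * D \<le> \<epsilon>"
proof -
  have mp: "0 < real m" using m1 by simp
  have sq: "(sqrt (2 * (p - 1) / real m))^2 = 2 * (p - 1) / real m" using p mp by simp
  have "2 * (p - 1) * e ^ 2 * D^2 \<le> real m * \<epsilon>^2"
    using mult_right_mono[OF mN, of "\<epsilon>^2"] \<epsilon> by (simp add: power_divide)
  then have "(e * sqrt (2 * (p - 1) / real m) * D)^2 \<le> \<epsilon>^2"
    unfolding power_mult_distrib sq using mp by (simp add: field_simps)
  then show ?thesis by (rule power2_le_imp_le) (use \<epsilon> in simp)
qed

theorem mainTheorem4:
  fixes p :: real and S :: "(complex ^ 'n ^ 'n) set" and A :: "complex ^ 'n ^ 'n"
  assumes p: "p > 1"
    and bS: "bounded S"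
    and A: "A \<in> convex hull S"
  shows "(\<exists>X :: nat \<Rightarrow> complex ^ 'n ^ 'n. (\<forall>i\<ge>1. X i \<in> S) \<and>
            (\<forall>k\<ge>1. (p \<le> 2 \<longrightarrow>
                 lp_norm p (A - (1 / real k) *\<^sub>R (\<Sum>i=1..k. X i))
                   \<le> 2 * exp 2 / p powr (1 / p) * real k powr (1 / p - 1) * lp_diam p S)
              \<and> (p \<ge> 2 \<longrightarrow>
                 lp_norm p (A - (1 / real k) *\<^sub>R (\<Sum>i=1..k. X i))
                   \<le> exp 2 * sqrt (2 * (p - 1) / real k) * lp_diam p S)))
       \<and> (\<forall>\<epsilon>>0. \<exists>B m. \<exists>Y :: nat \<Rightarrow> complex ^ 'n ^ 'n.
            lp_norm p (A - B) \<le> \<epsilon> \<and> m \<ge> 1 \<and> (\<forall>i\<in>{1..m}. Y i \<in> S) \<and>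
            B = (1 / real m) *\<^sub>R (\<Sum>i=1..m. Y i) \<and>
            (p \<le> 2 \<longrightarrow> m \<le> max 1 (nat \<lceil>(2 * exp 2 / p powr (1 / p)) powr (p / (p - 1))
                                       * (lp_diam p S / \<epsilon>) powr (p / (p - 1))\<rceil>)) \<and>
            (p \<ge> 2 \<longrightarrow> m \<le> max 1 (nat \<lceil>2 * (p - 1) * exp 2 ^ 2 * (lp_diam p S / \<epsilon>)\<^sup>2\<rceil>)))"
proof -
  from part1[OF p bS A] obtain X :: "nat \<Rightarrow> complex ^ 'n ^ 'n" where
    X1: "\<forall>i\<ge>1. X i \<in> S" and
    X2: "\<forall>k\<ge>1. (p \<le> 2 \<longrightarrow>
                 lp_norm p (A - (1 / real k) *\<^sub>R (\<Sum>i=1..k. X i))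
                   \<le> 2 * exp 2 / p powr (1 / p) * real k powr (1 / p - 1) * lp_diam p S)
              \<and> (p \<ge> 2 \<longrightarrow>
                 lp_norm p (A - (1 / real k) *\<^sub>R (\<Sum>i=1..k. X i))
                   \<le> exp 2 * sqrt (2 * (p - 1) / real k) * lp_diam p S)"
    by blast
  define D where "D = lp_diam p S"
  have "S \<noteq> {}" using A by auto
  then obtain s where s: "s \<in> S" by auto
  have D0: "0 \<le> D" unfolding D_def
    using diam_upper[OF bS _ s s, of p] p lp_nonneg[of p "s - s"] by linarith
  define c1 where "c1 = 2 * exp 2 / p powr (1 / p)"
  have c1p: "0 < c1" using p by (simp add: c1_def)
  define N1 where "N1 \<epsilon> = c1 powr (p / (p - 1)) * (D / \<epsilon>) powr (p / (p - 1))" for \<epsilon>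
  define N2 where "N2 \<epsilon> = 2 * (p - 1) * exp 2 ^ 2 * (D / \<epsilon>)\<^sup>2" for \<epsilon>
  have N12: "N1 \<epsilon> = N2 \<epsilon>" if "p = 2" "0 < \<epsilon>" for \<epsilon>
  proof -
    have "c1 = 2 * exp 2 / sqrt 2" using that by (simp add: c1_def powr_half_sqrt)
    then have "c1 powr 2 = 2 * exp 2 ^ 2" using c1p by (simp add: power_divide power_mult_distrib)
    moreover have "(D / \<epsilon>) powr 2 = (D / \<epsilon>)^2" using that D0 by simp
    ultimately show ?thesis using that by (simp add: N1_def N2_def)
  qed
  show ?thesis
  proof (intro conjI allI impI)
    show "\<exists>X :: nat \<Rightarrow> complex ^ 'n ^ 'n. (\<forall>i\<ge>1. X i \<in> S) \<and>
            (\<forall>k\<ge>1. (p \<le> 2 \<longrightarrow>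
                 lp_norm p (A - (1 / real k) *\<^sub>R (\<Sum>i=1..k. X i))
                   \<le> 2 * exp 2 / p powr (1 / p) * real k powr (1 / p - 1) * lp_diam p S)
              \<and> (p \<ge> 2 \<longrightarrow>
                 lp_norm p (A - (1 / real k) *\<^sub>R (\<Sum>i=1..k. X i))
                   \<le> exp 2 * sqrt (2 * (p - 1) / real k) * lp_diam p S))"
      using X1 X2 by blast
  next
    fix \<epsilon> :: real assume \<epsilon>: "\<epsilon> > 0"
    show "\<exists>B m. \<exists>Y :: nat \<Rightarrow> complex ^ 'n ^ 'n.
            lp_norm p (A - B) \<le> \<epsilon> \<and> m \<ge> 1 \<and> (\<forall>i\<in>{1..m}. Y i \<in> S) \<and>
            B = (1 / real m) *\<^sub>R (\<Sum>i=1..m. Y i) \<and>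
            (p \<le> 2 \<longrightarrow> m \<le> max 1 (nat \<lceil>(2 * exp 2 / p powr (1 / p)) powr (p / (p - 1))
                                       * (lp_diam p S / \<epsilon>) powr (p / (p - 1))\<rceil>)) \<and>
            (p \<ge> 2 \<longrightarrow> m \<le> max 1 (nat \<lceil>2 * (p - 1) * exp 2 ^ 2 * (lp_diam p S / \<epsilon>)\<^sup>2\<rceil>))"
    proof (cases "p \<le> 2")
      case True
      define m where "m = max 1 (nat \<lceil>N1 \<epsilon>\<rceil>)"
      have m1: "1 \<le> m" by (simp add: m_def)
      have mN: "N1 \<epsilon> \<le> real m" unfolding m_def
        using real_nat_ceiling_ge of_nat_mono[OF max.cobounded2] order_trans by blast
      have err: "lp_norm p (A - (1 / real m) *\<^sub>R (\<Sum>i=1..m. X i)) \<le> \<epsilon>"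
      proof -
        have "lp_norm p (A - (1 / real m) *\<^sub>R (\<Sum>i=1..m. X i)) \<le> c1 * real m powr (1 / p - 1) * D"
          using X2 m1 True by (simp add: c1_def D_def)
        also have "\<dots> \<le> \<epsilon>"
          by (rule bound1_eps[OF p D0 \<epsilon> c1p m1]) (use mN in \<open>simp add: N1_def\<close>)
        finally show ?thesis .
      qed
      show ?thesis
      proof (intro exI conjI impI)
        show "lp_norm p (A - (1 / real m) *\<^sub>R (\<Sum>i=1..m. X i)) \<le> \<epsilon>" by (rule err)
        show "1 \<le> m" by (rule m1)
        show "\<forall>i\<in>{1..m}. X i \<in> S" using X1 by auto
        show "m \<le> max 1 (nat \<lceil>(2 * exp 2 / p powr (1 / p)) powr (p / (p - 1)) * (lp_diam p S / \<epsilon>) powr (p / (p - 1))\<rceil>)"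
          by (simp add: m_def N1_def c1_def D_def)
        assume "2 \<le> p"
        then have "p = 2" using True by simp
        then show "m \<le> max 1 (nat \<lceil>2 * (p - 1) * exp 2 ^ 2 * (lp_diam p S / \<epsilon>)\<^sup>2\<rceil>)"
          using N12[OF _ \<epsilon>] by (simp add: m_def N2_def D_def)
      qed simp
    next
      case False
      define m where "m = max 1 (nat \<lceil>N2 \<epsilon>\<rceil>)"
      have m1: "1 \<le> m" by (simp add: m_def)
      have mN: "N2 \<epsilon> \<le> real m" unfolding m_def
        using real_nat_ceiling_ge of_nat_mono[OF max.cobounded2] order_trans by blast
      have err: "lp_norm p (A - (1 / real m) *\<^sub>R (\<Sum>i=1..m. X i)) \<le> \<epsilon>"
      proof -
        have "lp_norm p (A - (1 / real m) *\<^sub>R (\<Sum>i=1..m. X i)) \<le> exp 2 * sqrt (2 * (p - 1) / real m) * D"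
          using X2 m1 False by (simp add: D_def)
        also have "\<dots> \<le> \<epsilon>"
          by (rule bound2_eps) (use p D0 \<epsilon> m1 mN in \<open>auto simp: N2_def\<close>)
        finally show ?thesis .
      qed
      show ?thesis
      proof (intro exI conjI impI)
        show "lp_norm p (A - (1 / real m) *\<^sub>R (\<Sum>i=1..m. X i)) \<le> \<epsilon>" by (rule err)
        show "1 \<le> m" by (rule m1)
        show "\<forall>i\<in>{1..m}. X i \<in> S" using X1 by auto
        show "m \<le> max 1 (nat \<lceil>2 * (p - 1) * exp 2 ^ 2 * (lp_diam p S / \<epsilon>)\<^sup>2\<rceil>)"
          by (simp add: m_def N2_def D_def)
        assume "p \<le> 2" then show "m \<le> max 1 (nat \<lceil>(2 * exp 2 / p powr (1 / p)) powr (p / (p - 1)) * (lp_diam p S / \<epsilon>) powr (p / (p - 1))\<rceil>)"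
          using False by simp
      qed simp
    qed
  qed
qed

end
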